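(* For every $p\ge 0$, every permutation in the basis $\mathcal{B}_p$ has length $n$ with $p+2\le n\le 2(p+1)$. In particular $\mathcal{B}_p$ is finite.
   Context: A right-jump transforms $\sigma=\sigma_1\cdots\sigma_n$ into $\sigma_1\cdots\sigma_{i-1}\sigma_{i+1}\cdots\sigma_j\sigma_i\sigma_{j+1}\cdots\sigma_n$ for some $1\le i<j\le n$. A permutation $\pi$ of $[k]$ is a pattern of $\sigma$ (written $\pi\prec\sigma$) if some subsequence of $\sigma$ is order-isomorphic to $\pi$. $\mathcal{C}_p$ is the set of all permutations (of any length $n$) obtainable from the identity $12\cdots n$ by at most $p$ right-jumps. The basis $\mathcal{B}_p$ is the set of permutations $\sigma\notin\mathcal{C}_p$ such that every pattern $\pi\prec\sigma$ with $\pi\ne\sigma$ lies in $\mathcal{C}_p$. *)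

theory Defs
  imports Main "HOL-Library.Sublist"
begin

definition is_perm :: "nat list \<Rightarrow> bool" where
  "is_perm xs \<longleftrightarrow> distinct xs \<and> set xs = {1..length xs}"

definition identity_perm :: "nat \<Rightarrow> nat list" where
  "identity_perm n = [1..<n+1]"

text \<open>Right-jump, 0-indexed positions i < j < length xs: the entry at position i
  is removed and reinserted right after the entry originally at position j.\<close>
definition right_jump :: "nat list \<Rightarrow> nat \<Rightarrow> nat \<Rightarrow> nat list" where
  "right_jump xs i j = take i xs @ take (j - i) (drop (Suc i) xs) @ [xs ! i] @ drop (Suc j) xs"

inductive reach :: "nat \<Rightarrow> nat list \<Rightarrow> bool" where
  reach_id: "reach 0 (identity_perm n)"
| reach_step: "reach k xs \<Longrightarrow> i < j \<Longrightarrow> j < length xs \<Longrightarrow> reach (Suc k) (right_jump xs i j)"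

definition Cls :: "nat \<Rightarrow> nat list set" where
  "Cls p = {xs. \<exists>k\<le>p. reach k xs}"

definition order_iso :: "nat list \<Rightarrow> nat list \<Rightarrow> bool" where
  "order_iso a b \<longleftrightarrow> length a = length b \<and>
     (\<forall>i<length a. \<forall>j<length a. (a ! i < a ! j) \<longleftrightarrow> (b ! i < b ! j))"

definition is_pattern :: "nat list \<Rightarrow> nat list \<Rightarrow> bool" where
  "is_pattern \<pi> \<sigma> \<longleftrightarrow> is_perm \<pi> \<and> (\<exists>s. subseq s \<sigma> \<and> order_iso \<pi> s)"

definition basis :: "nat \<Rightarrow> nat list set" where
  "basis p = {\<sigma>. is_perm \<sigma> \<and> \<sigma> \<notin> Cls p \<and>
      (\<forall>\<pi>. is_pattern \<pi> \<sigma> \<and> \<pi> \<noteq> \<sigma> \<longrightarrow> \<pi> \<in> Cls p)}"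

end

theory Submission
  imports Defs
begin

fun nb :: "nat \<Rightarrow> nat list \<Rightarrow> nat" where
  "nb m [] = 0"
| "nb m (x#xs) = (if x < m then 1 else 0) + nb (max m x) xs"

lemma nb_append: "nb m (A @ R) = nb m A + nb (foldl max m A) R"
  by (induction A arbitrary: m) auto

lemma nb_mono: "m \<le> m' \<Longrightarrow> nb m xs \<le> nb m' xs"
proof (induction xs arbitrary: m m')
  case (Cons x xs)
  have "nb (max m x) xs \<le> nb (max m' x) xs" using Cons by simp
  then show ?case using Cons.prems by auto
qed simp

lemma foldl_max_comm: "foldl max (max M a) B = max (foldl max M B) (a::nat)"
proof (induction B arbitrary: M)
  case (Cons b B)
  have "max (max M a) b = max (max M b) a" by (simp add: max_def)
  then show ?case using Cons.IH[of "max M b"] by simp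
qed simp

lemma nb_move: "nb M (B @ a # D) \<le> Suc (nb M (a # B @ D))"
proof -
  have "nb M (B @ a # D) = nb M B + nb (foldl max M B) (a # D)" by (rule nb_append)
  also have "\<dots> \<le> nb M B + 1 + nb (max (foldl max M B) a) D" by simp
  also have "\<dots> \<le> nb (max M a) B + 1 + nb (foldl max (max M a) B) D"
    using nb_mono[of M "max M a" B] by (simp add: foldl_max_comm)
  also have "\<dots> \<le> Suc (nb M (a # B @ D))" by (simp add: nb_append)
  finally show ?thesis .
qed

lemma nb_rj:
  assumes "i < j" "j < length xs"
  shows "nb m (right_jump xs i j) \<le> Suc (nb m xs)"
proof -
  define A where "A = take i xs"
  define B where "B = take (j - i) (drop (Suc i) xs)"
  define D where "D = drop (Suc j) xs"
  define a where "a = xs ! i"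
  have d: "drop (Suc i) xs = B @ D"
  proof -
    have e: "j - i + Suc i = Suc j" using assms by simp
    show ?thesis unfolding B_def D_def using append_take_drop_id[of "j-i" "drop (Suc i) xs"] e by simp
  qed
  have xs: "xs = A @ a # B @ D"
    unfolding A_def a_def using id_take_nth_drop[of i xs] assms d by simp
  have rj: "right_jump xs i j = A @ B @ a # D"
    unfolding right_jump_def A_def B_def D_def a_def by simp
  have "nb m xs = nb m A + nb (foldl max m A) (a # B @ D)"
    using xs nb_append by metis
  moreover have "nb m (A @ B @ a # D) = nb m A + nb (foldl max m A) (B @ a # D)"
    using nb_append by metis
  ultimately show ?thesis unfolding rj
    using nb_move[of "foldl max m A" B a D] by simp
qed

lemma nb_sorted: "sorted xs \<Longrightarrow> \<forall>x\<in>set xs. m \<le> x \<Longrightarrow> nb m xs = 0"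
proof (induction xs arbitrary: m)
  case (Cons x xs)
  have a: "\<not> x < m" "max m x = x" using Cons.prems by auto
  have "nb x xs = 0" using Cons.IH[of x] Cons.prems by simp
  then show ?case using a by simp
qed simp

lemma reach_nb: "reach k xs \<Longrightarrow> nb 0 xs \<le> k"
proof (induction rule: reach.induct)
  case (reach_id n)
  then show ?case unfolding identity_perm_def by (intro eq_imp_le nb_sorted sorted_upt) auto
next
  case (reach_step k xs i j)
  then show ?case using nb_rj[of i j xs 0] by simp
qed

lemma nb_zero: "nb m xs = 0 \<Longrightarrow> sorted xs \<and> (\<forall>x\<in>set xs. m \<le> x)"
proof (induction xs arbitrary: m)
  case (Cons x xs)
  have a: "\<not> x < m" using Cons.prems by (auto split: if_splits)
  have "nb (max m x) xs = 0" using Cons.prems by (auto split: if_splits)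
  then have "sorted xs \<and> (\<forall>y\<in>set xs. max m x \<le> y)" by (rule Cons.IH)
  then show ?case using a by auto
qed simp

lemma nb_pos: "nb m xs > 0 \<Longrightarrow> \<exists>P y C. xs = P @ y # C \<and> (y < m \<or> (\<exists>w\<in>set P. y < w))"
proof (induction xs arbitrary: m)
  case Nil then show ?case by simp
next
  case (Cons x xs)
  show ?case
  proof (cases "x < m")
    case True then show ?thesis by (intro exI[of _ "[]"]) auto
  next
    case False
    then have "nb (max m x) xs > 0" using Cons.prems by simp
    from Cons.IH[OF this] obtain P y C where "xs = P @ y # C" "y < max m x \<or> (\<exists>w\<in>set P. y < w)"
      by blast
    then show ?thesis by (intro exI[of _ "x#P"] exI[of _ y] exI[of _ C]) auto
  qed
qed


lemma foldl_max_le: "m \<le> (y::nat) \<Longrightarrow> \<forall>a\<in>set A. a \<le> y \<Longrightarrow> foldl max m A \<le> y"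
  by (induction A arbitrary: m) auto

lemma foldl_max_ge: "(m::nat) \<le> foldl max m A"
proof (induction A arbitrary: m)
  case (Cons a A)
  have "max m a \<le> foldl max (max m a) A" by (rule Cons.IH)
  then show ?case by simp
qed simp

lemma nb_swap:
  assumes "\<forall>a\<in>set A. a \<le> y" "y < w"
  shows "nb 0 (A @ w # B @ y # C) = Suc (nb 0 (A @ y # w # B @ C))"
proof -
  define M where "M = foldl max 0 A"
  have M: "M \<le> y" unfolding M_def using foldl_max_le[of 0 y A] assms by simp
  define F where "F = foldl max w B"
  have F: "w \<le> F" unfolding F_def by (rule foldl_max_ge)
  have m1: "\<not> w < M" "max M w = w" "y < F" "max F y = F" "\<not> y < M" "max M y = y" "\<not> w < y" "max y w = w"
    using M assms F by auto
  have "nb M (w # B @ y # C) = nb w (B @ y # C)" using m1 by simp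
  also have "\<dots> = nb w B + nb F (y # C)" unfolding F_def by (rule nb_append)
  also have "\<dots> = nb w B + 1 + nb F C" using m1 by simp
  finally have e1: "nb M (w # B @ y # C) = nb w B + 1 + nb F C" .
  have "nb M (y # w # B @ C) = nb w (B @ C)" using m1 by simp
  also have "\<dots> = nb w B + nb F C" unfolding F_def by (rule nb_append)
  finally have e2: "nb M (y # w # B @ C) = nb w B + nb F C" .
  have "nb 0 (A @ w # B @ y # C) = nb 0 A + nb M (w # B @ y # C)" unfolding M_def by (rule nb_append)
  moreover have "nb 0 (A @ y # w # B @ C) = nb 0 A + nb M (y # w # B @ C)" unfolding M_def by (rule nb_append)
  ultimately show ?thesis using e1 e2 by simp
qed

lemma perm_reach_k: "nb 0 \<sigma> = k \<Longrightarrow> is_perm \<sigma> \<Longrightarrow> reach k \<sigma>"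
proof (induction k arbitrary: \<sigma>)
  case 0
  then have s: "sorted \<sigma>" using nb_zero[of 0 \<sigma>] by simp
  have eq: "\<sigma> = identity_perm (length \<sigma>)"
    unfolding identity_perm_def
    apply (rule sorted_distinct_set_unique)
    using s 0 sorted_upt[of 1 "length \<sigma> + 1"] by (auto simp: is_perm_def simp del: upt_Suc)
  have "reach 0 \<sigma>" by (subst eq, rule reach_id)
  then show ?case .
next
  case (Suc k)
  then have "nb 0 \<sigma> > 0" by simp
  from nb_pos[OF this] obtain P y C where PC: "\<sigma> = P @ y # C" "\<exists>w\<in>set P. y < w" by auto
  define A where "A = takeWhile (\<lambda>a. a \<le> y) P"
  have "dropWhile (\<lambda>a. a \<le> y) P \<noteq> []" using PC(2) leD by (auto simp: dropWhile_eq_Nil_conv)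
  then obtain w B where wB: "dropWhile (\<lambda>a. a \<le> y) P = w # B" by (cases "dropWhile (\<lambda>a. a \<le> y) P") auto
  have PP: "P = A @ w # B \<and> \<not> w \<le> y"
    using wB dropWhile_eq_Cons_conv[of "\<lambda>a. a \<le> y" P w B] unfolding A_def by blast
  then have P: "P = A @ w # B" and yw: "y < w" by auto
  have Ay: "\<forall>a\<in>set A. a \<le> y" unfolding A_def by (auto dest: set_takeWhileD)
  have sig: "\<sigma> = A @ w # B @ y # C" using PC P by simp
  define \<tau> where "\<tau> = A @ y # w # B @ C"
  have nbt: "nb 0 \<tau> = k" using nb_swap[OF Ay yw, of B C] Suc.prems(1) sig \<tau>_def by simp
  have st: "set \<tau> = set \<sigma>" unfolding sig \<tau>_def by auto
  have lt: "length \<tau> = length \<sigma>" unfolding sig \<tau>_def by simp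
  have dsig: "distinct \<sigma>" "set \<sigma> = {1..length \<sigma>}" using Suc.prems(2) unfolding is_perm_def by auto
  have "card (set \<tau>) = length \<tau>" using distinct_card[OF dsig(1)] st lt by simp
  then have "distinct \<tau>" by (rule card_distinct)
  then have pt: "is_perm \<tau>" unfolding is_perm_def using st lt dsig(2) by simp
  have r: "reach k \<tau>" using Suc.IH[OF nbt pt] .
  have t1: "take (length A) \<tau> = A" "drop (Suc (length A)) \<tau> = w # B @ C" "\<tau> ! length A = y"
    "drop (Suc (length A + Suc (length B))) \<tau> = C"
    unfolding \<tau>_def by simp_all
  have t2: "take (length A + Suc (length B) - length A) (w # B @ C) = w # B" by simp
  have rj: "right_jump \<tau> (length A) (length A + Suc (length B)) = \<sigma>"
    unfolding right_jump_def t1 t2 sig by simp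
  have "reach (Suc k) (right_jump \<tau> (length A) (length A + Suc (length B)))"
    by (rule reach_step[OF r]) (simp_all add: \<tau>_def)
  then have "reach (Suc k) \<sigma>" by (simp only: rj)
  then show ?case .
qed

lemma perm_reach: "is_perm \<sigma> \<Longrightarrow> reach (nb 0 \<sigma>) \<sigma>"
  using perm_reach_k by blast

lemma Cls_char: "is_perm \<sigma> \<Longrightarrow> \<sigma> \<in> Cls p \<longleftrightarrow> nb 0 \<sigma> \<le> p"
proof
  assume "\<sigma> \<in> Cls p"
  then obtain k where "k \<le> p" "reach k \<sigma>" unfolding Cls_def by blast
  then show "nb 0 \<sigma> \<le> p" using reach_nb[of k \<sigma>] by linarith
next
  assume "is_perm \<sigma>" "nb 0 \<sigma> \<le> p"
  then show "\<sigma> \<in> Cls p" unfolding Cls_def using perm_reach by blast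
qed


lemma subseq2_set: "subseq [z,y] xs \<Longrightarrow> y \<in> set xs \<and> z \<in> set xs"
proof -
  assume a: "subseq [z,y] xs"
  obtain y' where "y' \<in> set xs" "y = y'" using list_emb_set[OF a, of y] by auto
  moreover obtain z' where "z' \<in> set xs" "z = z'" using list_emb_set[OF a, of z] by auto
  ultimately show ?thesis by simp
qed

lemma nb_card:
  "distinct xs \<Longrightarrow> nb m xs = card {y\<in>set xs. y < m \<or> (\<exists>z. y < z \<and> subseq [z,y] xs)}"
proof (induction xs arbitrary: m)
  case Nil then show ?case by simp
next
  case (Cons x xs)
  have xn: "x \<notin> set xs" "distinct xs" using Cons.prems by auto
  have e1: "\<not> subseq [z,x] (x#xs)" for z
  proof
    assume h: "subseq [z,x] (x#xs)"
    have "subseq [x] xs \<or> subseq [z,x] xs" using h by (cases "z = x") simp_all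
    then have "x \<in> set xs" using subseq2_set[of z x xs] subseq_singleton_left[of x xs] by blast
    with xn show False by simp
  qed
  have e2: "(\<exists>z. y < z \<and> subseq [z,y] (x#xs)) \<longleftrightarrow> y < x \<or> (\<exists>z. y < z \<and> subseq [z,y] xs)"
    if yx: "y \<in> set xs" for y
  proof
    assume "\<exists>z. y < z \<and> subseq [z,y] (x#xs)"
    then obtain z where z: "y < z" "subseq [z,y] (x#xs)" by blast
    show "y < x \<or> (\<exists>z. y < z \<and> subseq [z,y] xs)"
    proof (cases "z = x")
      case True then show ?thesis using z(1) by simp
    next
      case False
      then have "subseq [z,y] xs" using z(2) by simp
      then show ?thesis using z(1) by blast
    qed
  next
    assume a: "y < x \<or> (\<exists>z. y < z \<and> subseq [z,y] xs)"
    show "\<exists>z. y < z \<and> subseq [z,y] (x#xs)"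
    proof (cases "y < x")
      case True
      have "subseq [y] xs" using yx subseq_singleton_left[of y xs] by simp
      then have "subseq [x,y] (x#xs)" by simp
      then show ?thesis using True by blast
    next
      case False
      then obtain z where z: "y < z" "subseq [z,y] xs" using a by blast
      then have "z \<noteq> x" using xn subseq2_set[of z y xs] by blast
      then have "subseq [z,y] (x#xs)" using z(2) by simp
      then show ?thesis using z(1) by blast
    qed
  qed
  define R where "R = {y\<in>set xs. y < max m x \<or> (\<exists>z. y < z \<and> subseq [z,y] xs)}"
  define L where "L = {y\<in>set (x#xs). y < m \<or> (\<exists>z. y < z \<and> subseq [z,y] (x#xs))}"
  have xR: "x \<notin> R" unfolding R_def using xn by simp
  have fR: "finite R" unfolding R_def by simp
  have eq: "L = (if x < m then insert x R else R)"
  proof (rule set_eqI)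
    fix y
    show "y \<in> L \<longleftrightarrow> y \<in> (if x < m then insert x R else R)"
    proof (cases "y = x")
      case True
      have "y \<in> L \<longleftrightarrow> x < m" unfolding L_def using True e1 by simp
      then show ?thesis using True xR by simp
    next
      case False
      show ?thesis
      proof (cases "y \<in> set xs")
        case True
        have "y \<in> L \<longleftrightarrow> y < m \<or> (\<exists>z. y < z \<and> subseq [z,y] (x#xs))" unfolding L_def using True by simp
        also have "\<dots> \<longleftrightarrow> y < m \<or> y < x \<or> (\<exists>z. y < z \<and> subseq [z,y] xs)" using e2[OF True] by simp
        also have "\<dots> \<longleftrightarrow> y \<in> R" unfolding R_def using True by (auto simp: max_def)
        finally show ?thesis using False by simp
      next
        case F2: False
        have "y \<notin> L" unfolding L_def using False F2 by simp
        moreover have "y \<notin> R" unfolding R_def using F2 by simp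
        ultimately show ?thesis using False by simp
      qed
    qed
  qed
  have "card L = (if x < m then 1 else 0) + card R" unfolding eq using xR fR by simp
  moreover have "nb (max m x) xs = card R" unfolding R_def by (rule Cons.IH[OF xn(2)])
  ultimately show ?case unfolding L_def by simp
qed

definition rk :: "nat set \<Rightarrow> nat \<Rightarrow> nat" where
  "rk S x = card {y\<in>S. y \<le> x}"

definition std :: "nat list \<Rightarrow> nat list" where
  "std s = map (rk (set s)) s"

lemma rk_mono:
  assumes "finite S" "a \<in> S" "b \<in> S"
  shows "a < b \<longleftrightarrow> rk S a < rk S b"
proof
  assume "a < b"
  then have "b \<in> {y\<in>S. y \<le> b}" "b \<notin> {y\<in>S. y \<le> a}" using assms by auto
  moreover have "{y\<in>S. y \<le> a} \<subseteq> {y\<in>S. y \<le> b}" using \<open>a < b\<close> by auto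
  ultimately have "{y\<in>S. y \<le> a} \<subset> {y\<in>S. y \<le> b}" by blast
  then show "rk S a < rk S b" unfolding rk_def using assms by (intro psubset_card_mono) auto
next
  assume "rk S a < rk S b"
  moreover have "b \<le> a \<Longrightarrow> rk S b \<le> rk S a" unfolding rk_def using assms
    by (intro card_mono) auto
  ultimately show "a < b" by linarith
qed

lemma std_perm:
  assumes "distinct s" shows "is_perm (std s)"
proof -
  let ?S = "set s"
  have inj: "inj_on (rk ?S) ?S"
  proof (rule inj_onI)
    fix a b assume ab: "a \<in> ?S" "b \<in> ?S" "rk ?S a = rk ?S b"
    show "a = b"
    proof (rule ccontr)
      assume "a \<noteq> b"
      then have "a < b \<or> b < a" by arith
      then show False
        using rk_mono[OF finite_set ab(1) ab(2)] rk_mono[OF finite_set ab(2) ab(1)] ab(3) by simp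
    qed
  qed
  have sub: "rk ?S ` ?S \<subseteq> {1..length s}"
  proof
    fix v assume "v \<in> rk ?S ` ?S"
    then obtain x where x: "x \<in> ?S" "v = rk ?S x" by blast
    have "x \<in> {y\<in>?S. y \<le> x}" using x(1) by simp
    then have "{y\<in>?S. y \<le> x} \<noteq> {}" by blast
    then have "card {y\<in>?S. y \<le> x} > 0" by (simp add: card_gt_0_iff)
    then have "rk ?S x \<ge> 1" unfolding rk_def by simp
    moreover have "rk ?S x \<le> card ?S" unfolding rk_def by (intro card_mono) auto
    ultimately show "v \<in> {1..length s}" using x distinct_card[OF assms] by auto
  qed
  have "card (rk ?S ` ?S) = length s" using card_image[OF inj] distinct_card[OF assms] by simp
  then have "rk ?S ` ?S = {1..length s}" using card_subset_eq[OF _ sub] by simp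
  then show ?thesis unfolding is_perm_def std_def using assms inj by (simp add: distinct_map)
qed

lemma std_iso: "order_iso (std s) s"
  unfolding order_iso_def std_def
proof (intro conjI allI impI)
  fix i j assume ij: "i < length (map (rk (set s)) s)" "j < length (map (rk (set s)) s)"
  then have "s ! i \<in> set s" "s ! j \<in> set s" by simp_all
  from rk_mono[OF finite_set this] ij
  show "(map (rk (set s)) s ! i < map (rk (set s)) s ! j) = (s ! i < s ! j)" by simp
qed simp

lemma nb_map:
  assumes "\<forall>a\<in>insert m (set xs). \<forall>b\<in>insert m (set xs). a < b \<longleftrightarrow> f a < f b"
  shows "nb (f m) (map f xs) = nb m (xs :: nat list)"
  using assms
proof (induction xs arbitrary: m)
  case Nil then show ?case by simp
next
  case (Cons x xs)
  have P: "\<And>a b. a \<in> insert m (set (x#xs)) \<Longrightarrow> b \<in> insert m (set (x#xs)) \<Longrightarrow> a < b \<longleftrightarrow> f a < f b"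
    using Cons.prems by blast
  have c: "x < m \<longleftrightarrow> f x < (f m :: nat)" by (rule P) simp_all
  have c2: "m < x \<longleftrightarrow> f m < (f x :: nat)" by (rule P) simp_all
  have mx: "max (f m) (f x) = f (max m x)"
  proof (cases "x < m")
    case True then show ?thesis using c by (simp add: max_def)
  next
    case False
    then show ?thesis using c c2 by (cases "m = x") (auto simp: max_def)
  qed
  have mm: "max m x \<in> insert m (set (x#xs))" by (simp add: max_def)
  have sub: "insert (max m x) (set xs) \<subseteq> insert m (set (x#xs))" using mm by auto
  have "nb (f (max m x)) (map f xs) = nb (max m x) xs"
    by (rule Cons.IH) (use sub P in blast)
  then show ?case using c mx by simp
qed

lemma nb_std: "nb 0 (std s) = nb 0 s"
proof (cases s)
  case Nil then show ?thesis by (simp add: std_def)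
next
  case (Cons x s')
  have "nb (rk (set s) x) (map (rk (set s)) s') = nb x s'"
  proof (rule nb_map, intro ballI)
    fix a b assume "a \<in> insert x (set s')" "b \<in> insert x (set s')"
    then have "a \<in> set s" "b \<in> set s" using Cons by auto
    from rk_mono[OF finite_set this] show "a < b \<longleftrightarrow> rk (set s) a < rk (set s) b" .
  qed
  then show ?thesis using Cons by (simp add: std_def)
qed

lemma nb_len: "nb m xs \<le> length xs"
proof (induction xs arbitrary: m)
  case (Cons x xs)
  have "nb (max m x) xs \<le> length xs" by (rule Cons.IH)
  moreover have "nb m (x#xs) \<le> 1 + nb (max m x) xs" by simp
  ultimately show ?case by simp
qed simp

theorem mainTheorem5:
  fixes p :: nat
  shows "(\<forall>\<sigma>\<in>basis p. p + 2 \<le> length \<sigma> \<and> length \<sigma> \<le> 2 * (p + 1)) \<and> finite (basis p)"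
proof -
  have bnd: "p + 2 \<le> length \<sigma> \<and> length \<sigma> \<le> 2 * (p + 1)" if sb: "\<sigma> \<in> basis p" for \<sigma>
  proof -
    have ps: "is_perm \<sigma>" and nc: "\<sigma> \<notin> Cls p"
      and pat: "\<And>\<pi>. is_pattern \<pi> \<sigma> \<Longrightarrow> \<pi> \<noteq> \<sigma> \<Longrightarrow> \<pi> \<in> Cls p"
      using sb unfolding basis_def by auto
    have gp: "p < nb 0 \<sigma>" using Cls_char[OF ps] nc by simp
    have dist: "distinct \<sigma>" using ps unfolding is_perm_def by simp
    have lo: "p + 2 \<le> length \<sigma>"
    proof (cases \<sigma>)
      case Nil then show ?thesis using gp by simp
    next
      case (Cons x xs)
      then show ?thesis using gp nb_len[of x xs] by simp
    qed
    have hi: "length \<sigma> \<le> 2 * (p + 1)"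
    proof (rule ccontr)
      assume big: "\<not> ?thesis"
      define N where "N = {y\<in>set \<sigma>. y < 0 \<or> (\<exists>z. y < z \<and> subseq [z,y] \<sigma>)}"
      have cN: "card N = nb 0 \<sigma>" unfolding N_def using nb_card[OF dist, of 0] by simp
      have "p + 1 \<le> card N" using cN gp by simp
      then obtain J where J: "J \<subseteq> N" "card J = p + 1" "finite J"
        by (rule obtain_subset_with_card_n)
      define w where "w y = (SOME z. y < z \<and> subseq [z,y] \<sigma>)" for y
      have w: "y < w y \<and> subseq [w y, y] \<sigma>" if "y \<in> J" for y
      proof -
        have "y \<in> N" using that J(1) by blast
        then have "\<exists>z. y < z \<and> subseq [z,y] \<sigma>" unfolding N_def by simp
        then show ?thesis unfolding w_def by (rule someI_ex)
      qed
      define K where "K = J \<union> w ` J"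
      have cK: "card K \<le> 2 * (p + 1)"
        unfolding K_def using card_Un_le[of J "w ` J"] card_image_le[OF J(3), of w] J(2) by simp
      define s where "s = filter (\<lambda>v. v \<in> K) \<sigma>"
      have ds: "distinct s" unfolding s_def using dist by simp
      have ls: "length s < length \<sigma>"
      proof -
        have "length s = card ({v. v \<in> K} \<inter> set \<sigma>)" unfolding s_def by (rule distinct_length_filter[OF dist])
        also have "\<dots> \<le> card K" using J(3) unfolding K_def by (intro card_mono) auto
        finally show ?thesis using cK big by simp
      qed
      have JN: "J \<subseteq> {y\<in>set s. y < 0 \<or> (\<exists>z. y < z \<and> subseq [z,y] s)}"
      proof
        fix y assume y: "y \<in> J"
        have "subseq (filter (\<lambda>v. v \<in> K) [w y, y]) s"
          unfolding s_def using w[OF y] by (intro subseq_filter) simp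
        moreover have "filter (\<lambda>v. v \<in> K) [w y, y] = [w y, y]" using y unfolding K_def by auto
        ultimately have ss: "subseq [w y, y] s" by simp
        moreover have "y \<in> set s" using subseq2_set[OF ss] by simp
        ultimately show "y \<in> {y\<in>set s. y < 0 \<or> (\<exists>z. y < z \<and> subseq [z,y] s)}"
          using w[OF y] by blast
      qed
      have "p + 1 \<le> nb 0 s"
        unfolding nb_card[OF ds] using card_mono[OF _ JN] J(2) by simp
      then have nbp: "p < nb 0 (std s)" using nb_std by simp
      have pp: "is_perm (std s)" by (rule std_perm[OF ds])
      have "subseq s \<sigma>" unfolding s_def by (rule subseq_filter_left)
      then have "is_pattern (std s) \<sigma>"
        unfolding is_pattern_def using pp std_iso[of s] by blast
      moreover have "std s \<noteq> \<sigma>" using ls by (auto simp: std_def)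
      ultimately have "std s \<in> Cls p" using pat by blast
      then show False using Cls_char[OF pp] nbp by simp
    qed
    show ?thesis using lo hi by simp
  qed
  have "basis p \<subseteq> {xs. set xs \<subseteq> {1..2 * (p+1)} \<and> length xs \<le> 2 * (p+1)}"
  proof
    fix \<sigma> assume a: "\<sigma> \<in> basis p"
    then have "set \<sigma> = {1..length \<sigma>}" unfolding basis_def is_perm_def by simp
    then show "\<sigma> \<in> {xs. set xs \<subseteq> {1..2 * (p+1)} \<and> length xs \<le> 2 * (p+1)}" using bnd[OF a] by auto
  qed
  then have "finite (basis p)" using finite_lists_length_le[of "{1..2 * (p+1)}" "2 * (p+1)"]
    by (auto intro: finite_subset)
  then show ?thesis using bnd by blast
qed

end
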